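(* Let $p\colon E\to B$ be a regular arc-covering with $E$ path-connected, let $e_0\in E$ and $b_0=p(e_0)$. Then there is a natural monomorphism $DTG(p)\to \pi(p,b_0)$ (sending a deck transformation $h$ to the class of $p\circ\alpha_h$, where $\alpha_h$ is any path in $E$ from $e_0$ to $h(e_0)$). This monomorphism is an isomorphism if $DTG(p)$ acts transitively on the fibers of $p$.
   Context: All maps are continuous. A map $p\colon E\to B$ is an arc-covering if for every $e_0\in E$, $t_0\in[0,1]$ and map $f\colon[0,1]\to B$ with $f(t_0)=p(e_0)$ there is a unique map $g\colon[0,1]\to E$ with $p\circ g=f$ and $g(t_0)=e_0$ (a lift). An arc-covering is regular if for every loop $\alpha$ in $B$ either all lifts of $\alpha$ are loops or none of them are. The monodromy group $\pi(p,b_0)$ is the set of equivalence classes of loops in $B$ at $b_0$, where $\alpha\sim\beta$ iff for any lifts $\tilde\alpha,\tilde\beta$ with $\tilde\alpha(0)=\tilde\beta(0)$ one has $\tilde\alpha(1)=\tilde\beta(1)$; the group operation is $[\alpha]\cdot[\beta]=[\alpha\ast\beta]$ (concatenation). The deck transformation group $DTG(p)$ is the group of homeomorphisms $h\colon E\to E$ with $p\circ h=p$. *)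

theory Defs
  imports "HOL-Analysis.Analysis" "HOL-Algebra.Group"
begin

text \<open>A lift of a map f : [0,1] -> B to E (paths are maps on the unit interval;
  values outside [0,1] are irrelevant).\<close>
definition is_lift :: "'a topology \<Rightarrow> ('a \<Rightarrow> 'b) \<Rightarrow> (real \<Rightarrow> 'b) \<Rightarrow> (real \<Rightarrow> 'a) \<Rightarrow> bool" where
  "is_lift E p f g \<longleftrightarrow> pathin E g \<and> (\<forall>t\<in>{0..1}. p (g t) = f t)"

definition arc_covering :: "'a topology \<Rightarrow> 'b topology \<Rightarrow> ('a \<Rightarrow> 'b) \<Rightarrow> bool" where
  "arc_covering E B p \<longleftrightarrow> continuous_map E B p \<and>
     (\<forall>e0\<in>topspace E. \<forall>t0\<in>{0..1::real}. \<forall>f. pathin B f \<and> f t0 = p e0 \<longrightarrow>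
        (\<exists>g. is_lift E p f g \<and> g t0 = e0) \<and>
        (\<forall>g g'. is_lift E p f g \<and> g t0 = e0 \<and> is_lift E p f g' \<and> g' t0 = e0
                \<longrightarrow> (\<forall>t\<in>{0..1}. g t = g' t)))"

definition regular_arc_covering :: "'a topology \<Rightarrow> 'b topology \<Rightarrow> ('a \<Rightarrow> 'b) \<Rightarrow> bool" where
  "regular_arc_covering E B p \<longleftrightarrow> arc_covering E B p \<and>
     (\<forall>\<alpha>. pathin B \<alpha> \<and> \<alpha> 0 = \<alpha> 1 \<longrightarrow>
        (\<forall>g. is_lift E p \<alpha> g \<longrightarrow> g 1 = g 0) \<or> (\<forall>g. is_lift E p \<alpha> g \<longrightarrow> g 1 \<noteq> g 0))"

definition loop_at :: "'b topology \<Rightarrow> 'b \<Rightarrow> (real \<Rightarrow> 'b) \<Rightarrow> bool" where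
  "loop_at B b0 \<alpha> \<longleftrightarrow> pathin B \<alpha> \<and> \<alpha> 0 = b0 \<and> \<alpha> 1 = b0"

definition mono_equiv :: "'a topology \<Rightarrow> ('a \<Rightarrow> 'b) \<Rightarrow> (real \<Rightarrow> 'b) \<Rightarrow> (real \<Rightarrow> 'b) \<Rightarrow> bool" where
  "mono_equiv E p \<alpha> \<beta> \<longleftrightarrow>
     (\<forall>ga gb. is_lift E p \<alpha> ga \<and> is_lift E p \<beta> gb \<and> ga 0 = gb 0 \<longrightarrow> ga 1 = gb 1)"

definition mono_class :: "'a topology \<Rightarrow> 'b topology \<Rightarrow> ('a \<Rightarrow> 'b) \<Rightarrow> 'b \<Rightarrow> (real \<Rightarrow> 'b) \<Rightarrow> (real \<Rightarrow> 'b) set" where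
  "mono_class E B p b0 \<alpha> = {\<beta>. loop_at B b0 \<beta> \<and> mono_equiv E p \<alpha> \<beta>}"

text \<open>Concatenation of paths (same formula as joinpaths, for arbitrary types).\<close>
definition concat_path :: "(real \<Rightarrow> 'b) \<Rightarrow> (real \<Rightarrow> 'b) \<Rightarrow> real \<Rightarrow> 'b" where
  "concat_path \<alpha> \<beta> = (\<lambda>t. if t \<le> 1/2 then \<alpha> (2 * t) else \<beta> (2 * t - 1))"

definition monodromy_group :: "'a topology \<Rightarrow> 'b topology \<Rightarrow> ('a \<Rightarrow> 'b) \<Rightarrow> 'b \<Rightarrow> (real \<Rightarrow> 'b) set monoid" where
  "monodromy_group E B p b0 =
     \<lparr>carrier = {mono_class E B p b0 \<alpha> | \<alpha>. loop_at B b0 \<alpha>},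
      mult = (\<lambda>X Y. mono_class E B p b0 (concat_path (SOME \<alpha>. \<alpha> \<in> X) (SOME \<beta>. \<beta> \<in> Y))),
      one = mono_class E B p b0 (\<lambda>t. b0)\<rparr>"

text \<open>The deck transformation group; deck transformations are normalised to be the
  identity outside the underlying set of E, so that they are determined by their action on E.\<close>
definition DTG :: "'a topology \<Rightarrow> ('a \<Rightarrow> 'b) \<Rightarrow> ('a \<Rightarrow> 'a) monoid" where
  "DTG E p =
     \<lparr>carrier = {h. homeomorphic_map E E h \<and> (\<forall>x\<in>topspace E. p (h x) = p x)
                  \<and> (\<forall>x. x \<notin> topspace E \<longrightarrow> h x = x)},
      mult = (\<lambda>h k. h \<circ> k),
      one = id\<rparr>"

definition acts_transitively_on_fibers :: "'a topology \<Rightarrow> ('a \<Rightarrow> 'b) \<Rightarrow> bool" where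
  "acts_transitively_on_fibers E p \<longleftrightarrow>
     (\<forall>x\<in>topspace E. \<forall>y\<in>topspace E. p x = p y \<longrightarrow> (\<exists>h\<in>carrier (DTG E p). h x = y))"

end

theory Submission
  imports Defs
begin

lemma pathin_concat:
  assumes g1: "pathin X g1" and g2: "pathin X g2" and e: "g2 0 = g1 1"
  shows "pathin X (concat_path g1 g2)"
  unfolding pathin_def concat_path_def
proof -
  let ?T01 = "top_of_set {0..1::real}"
  let ?g = "\<lambda>x. if x \<le> 1/2 then (g1 \<circ> (\<lambda>t. 2 * t)) x else (g2 \<circ> (\<lambda>t. 2 * t -1)) x"
  have "continuous_map (subtopology euclideanreal {0..1}) X ?g"
  proof (intro continuous_map_cases_le continuous_map_compose, force, force)
    show "continuous_map (subtopology ?T01 {x \<in> topspace ?T01. x \<le> 1/2}) ?T01 ((*) 2)"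
      by (auto simp: continuous_map_in_subtopology continuous_map_from_subtopology)
    have "continuous_map
           (subtopology (top_of_set {0..1}) {x. 0 \<le> x \<and> x \<le> 1 \<and> 1 \<le> x * 2})
           euclideanreal (\<lambda>t. 2 * t - 1)"
      by (intro continuous_intros) (force intro: continuous_map_from_subtopology)
    then show "continuous_map (subtopology ?T01 {x \<in> topspace ?T01. 1/2 \<le> x}) ?T01 (\<lambda>t. 2 * t - 1)"
      by (force simp: continuous_map_in_subtopology)
    show "(g1 \<circ> (*) 2) x = (g2 \<circ> (\<lambda>t. 2 * t - 1)) x" if "x \<in> topspace ?T01" "x = 1/2" for x
    proof -
      have "2 * x = 1" using that by simp
      then show ?thesis by (simp add: e)
    qed
  qed (use g1 g2 in \<open>auto simp: pathin_def\<close>)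
  then show "continuous_map (subtopology euclideanreal {0..1}) X (\<lambda>t. if t \<le> 1 / 2 then g1 (2 * t) else g2 (2 * t - 1))"
    by (rule continuous_map_eq) auto
qed

definition rev_path :: "(real \<Rightarrow> 'b) \<Rightarrow> real \<Rightarrow> 'b" where
  "rev_path g = (\<lambda>t. g (1 - t))"

lemma pathin_rev: "pathin X g \<Longrightarrow> pathin X (rev_path g)"
  unfolding pathin_def rev_path_def
  apply (rule continuous_map_compose[of _ "subtopology euclideanreal {0..1}" "\<lambda>t. 1 - t", unfolded o_def])
  apply (auto intro!: continuous_map_compose simp: continuous_map_in_subtopology continuous_on_op_minus)
  done

lemma pathin_in: "pathin X g \<Longrightarrow> t \<in> {0..1} \<Longrightarrow> g t \<in> topspace X"
  by (auto simp: pathin_def continuous_map_def)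

lemma arc_covering_D:
  assumes "arc_covering E B p" "e0 \<in> topspace E" "t0 \<in> {0..1}" "pathin B f" "f t0 = p e0"
  shows "(\<exists>g. is_lift E p f g \<and> g t0 = e0) \<and>
        (\<forall>g g'. is_lift E p f g \<and> g t0 = e0 \<and> is_lift E p f g' \<and> g' t0 = e0
                \<longrightarrow> (\<forall>t\<in>{0..1}. g t = g' t))"
proof -
  have "\<forall>e0\<in>topspace E. \<forall>t0\<in>{0..1::real}. \<forall>f. pathin B f \<and> f t0 = p e0 \<longrightarrow>
        (\<exists>g. is_lift E p f g \<and> g t0 = e0) \<and>
        (\<forall>g g'. is_lift E p f g \<and> g t0 = e0 \<and> is_lift E p f g' \<and> g' t0 = e0
                \<longrightarrow> (\<forall>t\<in>{0..1}. g t = g' t))"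
    using assms(1) unfolding arc_covering_def by (rule conjunct2)
  note h = bspec[OF bspec[OF this assms(2)] assms(3)]
  show ?thesis
    by (rule mp[OF spec[OF h, of f]]) (rule conjI[OF assms(4,5)])
qed

lemma lift_exists:
  assumes "arc_covering E B p" "e \<in> topspace E" "pathin B f" "f 0 = p e"
  shows "\<exists>g. is_lift E p f g \<and> g 0 = e"
  using arc_covering_D[OF assms(1,2) _ assms(3,4)] by simp

lemma lift_unique:
  assumes "arc_covering E B p" "is_lift E p f g" "is_lift E p f g'" "g 0 = g' 0" "t \<in> {0..1}"
  shows "g t = g' t"
proof -
  have e: "g 0 \<in> topspace E" using assms(2) by (simp add: is_lift_def path_start_in_topspace)
  have f0: "f 0 = p (g 0)" using assms(2) by (simp add: is_lift_def)
  have pf: "pathin B f"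
  proof -
    have cp: "continuous_map E B p" using assms(1) by (simp add: arc_covering_def)
    have "pathin E g" using assms(2) by (simp add: is_lift_def)
    then have "pathin B (p \<circ> g)" using pathin_compose[OF _ cp] by blast
    then show ?thesis
      unfolding pathin_def
      by (rule continuous_map_eq) (use assms(2) in \<open>auto simp: is_lift_def\<close>)
  qed
  have "\<forall>t\<in>{0..1}. g t = g' t"
    using arc_covering_D[OF assms(1) e _ pf f0, THEN conjunct2, rule_format, of g g'] assms(2-4) by simp
  then show ?thesis using assms(5) by blast
qed

lemma is_lift_concat_aux1:
  assumes "is_lift E p f1 g1" "is_lift E p f2 g2" "g2 0 = g1 1"
  shows "pathin E (concat_path g1 g2)" using assms by (simp add: is_lift_def pathin_concat)

lemma is_lift_concat_aux2:
  assumes "is_lift E p f1 g1" "is_lift E p f2 g2" "g2 0 = g1 1" "t \<in> {0..1}" "t \<le> 1/2"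
  shows "p (concat_path g1 g2 t) = concat_path f1 f2 t"
proof -
    have "2 * t \<in> {0..1}" using assms by auto
    then show ?thesis using assms(5) assms(1) unfolding is_lift_def concat_path_def by simp
qed

lemma is_lift_concat_aux3:
  assumes "is_lift E p f1 g1" "is_lift E p f2 g2" "g2 0 = g1 1" "t \<in> {0..1}" "\<not> t \<le> 1/2"
  shows "p (concat_path g1 g2 t) = concat_path f1 f2 t"
proof -
    have "2 * t - 1 \<in> {0..1}" using assms by auto
    then show ?thesis using assms(5) assms(2) unfolding is_lift_def concat_path_def by simp
qed

lemma is_lift_concat:
  assumes "is_lift E p f1 g1" "is_lift E p f2 g2" "g2 0 = g1 1"
  shows "is_lift E p (concat_path f1 f2) (concat_path g1 g2)"
  unfolding is_lift_def
proof (intro conjI ballI)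
  show "pathin E (concat_path g1 g2)" by (rule is_lift_concat_aux1[OF assms])
  fix t :: real assume t: "t \<in> {0..1}"
  show "p (concat_path g1 g2 t) = concat_path f1 f2 t"
  proof (cases "t \<le> 1/2")
    case True then show ?thesis by (rule is_lift_concat_aux2[OF assms t])
  next
    case False then show ?thesis by (rule is_lift_concat_aux3[OF assms t])
  qed
qed

lemma is_lift_rev_aux:
  assumes "is_lift E p f g" "t \<in> {0..1}"
  shows "p (rev_path g t) = rev_path f t"
proof -
  have "1 - t \<in> {0..1}" using assms by auto
  then show ?thesis using assms(1) unfolding is_lift_def rev_path_def by simp
qed

lemma is_lift_rev:
  assumes "is_lift E p f g"
  shows "is_lift E p (rev_path f) (rev_path g)"
  unfolding is_lift_def
proof (intro conjI ballI)
  show "pathin E (rev_path g)" using assms by (simp add: is_lift_def pathin_rev)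
  fix t :: real assume t: "t \<in> {0..1}"
  show "p (rev_path g t) = rev_path f t" by (rule is_lift_rev_aux[OF assms t])
qed

lemma is_lift_cong:
  assumes "\<forall>t\<in>{0..1}. f t = f' t"
  shows "is_lift E p f g = is_lift E p f' g"
  using assms unfolding is_lift_def by simp

lemma is_lift_self: "pathin E \<alpha> \<Longrightarrow> is_lift E p (p \<circ> \<alpha>) \<alpha>"
  by (simp add: is_lift_def)

lemma key:
  assumes reg: "regular_arc_covering E B p"
    and lb: "loop_at B b0 \<beta>" and lc: "loop_at B b0 \<gamma>"
    and gb: "is_lift E p \<beta> g\<beta>" and gc: "is_lift E p \<gamma> g\<gamma>"
    and s: "g\<beta> 0 = g\<gamma> 0" and en: "g\<beta> 1 = g\<gamma> 1"
  shows "mono_equiv E p \<beta> \<gamma>"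
  unfolding mono_equiv_def
proof (intro allI impI)
  fix ga gb
  assume a: "is_lift E p \<beta> ga \<and> is_lift E p \<gamma> gb \<and> ga 0 = gb 0"
  have ac: "arc_covering E B p" using reg by (simp add: regular_arc_covering_def)
  define L where "L = concat_path \<beta> (rev_path \<gamma>)"
  have prg: "pathin B (rev_path \<gamma>)" using lc by (simp add: loop_at_def pathin_rev)
  have pL: "pathin B L" unfolding L_def
    by (rule pathin_concat[OF _ prg]) (use lb lc in \<open>auto simp: loop_at_def rev_path_def\<close>)
  have L01: "L 0 = L 1" using lb lc by (simp add: L_def concat_path_def rev_path_def loop_at_def)
  have "is_lift E p L (concat_path g\<beta> (rev_path g\<gamma>))" unfolding L_def
    by (rule is_lift_concat[OF gb is_lift_rev[OF gc]]) (simp add: rev_path_def en)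
  moreover have "concat_path g\<beta> (rev_path g\<gamma>) 1 = concat_path g\<beta> (rev_path g\<gamma>) 0"
    using s by (simp add: concat_path_def rev_path_def)
  moreover have "(\<forall>g. is_lift E p L g \<longrightarrow> g 1 = g 0) \<or> (\<forall>g. is_lift E p L g \<longrightarrow> g 1 \<noteq> g 0)"
    using reg[unfolded regular_arc_covering_def, THEN conjunct2, rule_format, of L] pL L01 by simp
  ultimately have allloop: "\<forall>g. is_lift E p L g \<longrightarrow> g 1 = g 0"
    by blast
  have ga1: "ga 1 \<in> topspace E" using a by (simp add: is_lift_def path_finish_in_topspace)
  have pga1: "p (ga 1) = b0" using a lb by (simp add: is_lift_def loop_at_def)
  obtain r where r: "is_lift E p (rev_path \<gamma>) r" "r 0 = ga 1"
    using lift_exists[OF ac ga1 prg] lc pga1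
    by (auto simp: rev_path_def loop_at_def)
  have "is_lift E p L (concat_path ga r)" unfolding L_def
    by (rule is_lift_concat) (use a r in auto)
  then have "concat_path ga r 1 = concat_path ga r 0" using allloop by blast
  then have r1: "r 1 = ga 0" by (simp add: concat_path_def)
  have "is_lift E p (rev_path (rev_path \<gamma>)) (rev_path r)" by (rule is_lift_rev[OF r(1)])
  moreover have "is_lift E p \<gamma> (rev_path r) = is_lift E p (rev_path (rev_path \<gamma>)) (rev_path r)"
    by (rule is_lift_cong) (simp add: rev_path_def)
  ultimately have rr: "is_lift E p \<gamma> (rev_path r)" by simp
  have "rev_path r 1 = gb 1"
  proof (rule lift_unique[OF ac rr])
    show "is_lift E p \<gamma> gb" using a by simp
    show "rev_path r 0 = gb 0" using a r1 by (simp add: rev_path_def)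
  qed simp
  then show "ga 1 = gb 1" using r(2) by (simp add: rev_path_def)
qed

lemma mono_equiv_refl:
  assumes "arc_covering E B p" shows "mono_equiv E p \<alpha> \<alpha>"
  unfolding mono_equiv_def
proof (intro allI impI)
  fix ga gb assume a: "is_lift E p \<alpha> ga \<and> is_lift E p \<alpha> gb \<and> ga 0 = gb 0"
  show "ga 1 = gb 1" by (rule lift_unique[OF assms, where f=\<alpha>]) (use a in simp_all)
qed

lemma mono_equiv_sym:
  assumes e: "mono_equiv E p \<alpha> \<beta>" shows "mono_equiv E p \<beta> \<alpha>"
  unfolding mono_equiv_def
proof (intro allI impI)
  fix ga gb assume a: "is_lift E p \<beta> ga \<and> is_lift E p \<alpha> gb \<and> ga 0 = gb 0"
  then show "ga 1 = gb 1" using e[unfolded mono_equiv_def, rule_format, of gb ga] by simp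
qed

lemma mono_equiv_trans:
  assumes ac: "arc_covering E B p" and la: "loop_at B b0 \<alpha>" and lb: "loop_at B b0 \<beta>"
    and ab: "mono_equiv E p \<alpha> \<beta>" and bc: "mono_equiv E p \<beta> \<gamma>"
  shows "mono_equiv E p \<alpha> \<gamma>"
  unfolding mono_equiv_def
proof (intro allI impI)
  fix ga gc assume a: "is_lift E p \<alpha> ga \<and> is_lift E p \<gamma> gc \<and> ga 0 = gc 0"
  have t: "ga 0 \<in> topspace E" using a by (simp add: is_lift_def path_start_in_topspace)
  have ia: "is_lift E p \<alpha> ga" using a by simp
  then have pg: "p (ga 0) = \<alpha> 0" by (simp add: is_lift_def)
  have b: "\<beta> 0 = p (ga 0)" using pg la lb by (simp add: loop_at_def)
  have pb: "pathin B \<beta>" using lb by (simp add: loop_at_def)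
  obtain gb where gb: "is_lift E p \<beta> gb" "gb 0 = ga 0"
    using lift_exists[OF ac t pb b] by blast
  have "ga 1 = gb 1" using ab[unfolded mono_equiv_def, rule_format, of ga gb] a gb by simp
  also have "gb 1 = gc 1" using bc[unfolded mono_equiv_def, rule_format, of gb gc] a gb by simp
  finally show "ga 1 = gc 1" .
qed

lemma class_eq:
  assumes ac: "arc_covering E B p" and la: "loop_at B b0 \<alpha>" and lb: "loop_at B b0 \<alpha>'"
    and e: "mono_equiv E p \<alpha> \<alpha>'"
  shows "mono_class E B p b0 \<alpha> = mono_class E B p b0 \<alpha>'"
proof -
  have "mono_equiv E p \<alpha> \<beta> = mono_equiv E p \<alpha>' \<beta>" for \<beta>
    using mono_equiv_trans[OF ac la lb e, of \<beta>] mono_equiv_trans[OF ac lb la mono_equiv_sym[OF e], of \<beta>]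
    by blast
  then show ?thesis unfolding mono_class_def by simp
qed

lemma mem_class:
  assumes "arc_covering E B p" "loop_at B b0 \<alpha>"
  shows "\<alpha> \<in> mono_class E B p b0 \<alpha>"
  using assms(2) mono_equiv_refl[OF assms(1)] unfolding mono_class_def by simp

lemma DTG_carrierD:
  assumes "h \<in> carrier (DTG E p)"
  shows "continuous_map E E h" "\<And>x. x \<in> topspace E \<Longrightarrow> p (h x) = p x"
    "\<And>x. x \<notin> topspace E \<Longrightarrow> h x = x"
  using assms by (simp_all add: DTG_def homeomorphic_imp_continuous_map)

lemma cmap_in: "continuous_map X Y f \<Longrightarrow> x \<in> topspace X \<Longrightarrow> f x \<in> topspace Y"
  using continuous_map_funspace by blast

theorem proposition2p10:
  fixes E :: "'a topology" and B :: "'b topology" and p :: "'a \<Rightarrow> 'b"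
  assumes "regular_arc_covering E B p"
    and "path_connected_space E"
    and "e0 \<in> topspace E"
    and "b0 = p e0"
  shows "\<exists>\<phi>. \<phi> \<in> hom (DTG E p) (monodromy_group E B p b0)
            \<and> inj_on \<phi> (carrier (DTG E p))
            \<and> (\<forall>h\<in>carrier (DTG E p). \<forall>\<alpha>. pathin E \<alpha> \<and> \<alpha> 0 = e0 \<and> \<alpha> 1 = h e0
                  \<longrightarrow> \<phi> h = mono_class E B p b0 (p \<circ> \<alpha>))
            \<and> (acts_transitively_on_fibers E p
                  \<longrightarrow> \<phi> \<in> iso (DTG E p) (monodromy_group E B p b0))"
proof -
  note reg = assms(1) and pc = assms(2) and e0 = assms(3) and b0 = assms(4)
  have ac: "arc_covering E B p" using reg by (simp add: regular_arc_covering_def)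
  have cp: "continuous_map E B p" using ac by (simp add: arc_covering_def)
  define ap where "ap h = (SOME \<alpha>. pathin E \<alpha> \<and> \<alpha> 0 = e0 \<and> \<alpha> 1 = h e0)" for h :: "'a \<Rightarrow> 'a"
  define \<phi> where "\<phi> h = mono_class E B p b0 (p \<circ> ap h)" for h
  have ap: "pathin E (ap h) \<and> ap h 0 = e0 \<and> ap h 1 = h e0" if "h e0 \<in> topspace E" for h
  proof -
    have "\<exists>\<alpha>. pathin E \<alpha> \<and> \<alpha> 0 = e0 \<and> \<alpha> 1 = h e0"
      using pc e0 that unfolding path_connected_space_def by blast
    then show ?thesis unfolding ap_def by (rule someI_ex)
  qed
  have loop: "loop_at B b0 (p \<circ> \<alpha>)" if "pathin E \<alpha>" "\<alpha> 0 = e0" "p (\<alpha> 1) = b0" for \<alpha>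
    using that b0 pathin_compose[OF _ cp] by (auto simp: loop_at_def)
  have P: "\<phi> h = mono_class E B p b0 (p \<circ> \<alpha>)"
    if h: "h e0 \<in> topspace E" "p (h e0) = b0" and a: "pathin E \<alpha>" "\<alpha> 0 = e0" "\<alpha> 1 = h e0" for h \<alpha>
  proof -
    note aph = ap[of h, OF h(1)]
    have l1: "loop_at B b0 (p \<circ> ap h)" by (rule loop) (use aph h in simp_all)
    have l2: "loop_at B b0 (p \<circ> \<alpha>)" by (rule loop) (use a h in simp_all)
    have "mono_equiv E p (p \<circ> ap h) (p \<circ> \<alpha>)"
      by (rule key[OF reg l1 l2 is_lift_self is_lift_self]) (use aph a in simp_all)
    then show ?thesis unfolding \<phi>_def by (rule class_eq[OF ac l1 l2])
  qed
  have inc: "h e0 \<in> topspace E \<and> p (h e0) = b0" if "h \<in> carrier (DTG E p)" for h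
  proof
    show "h e0 \<in> topspace E" using cmap_in[OF DTG_carrierD(1)[OF that] e0] .
    show "p (h e0) = b0" using DTG_carrierD(2)[OF that e0] b0 by simp
  qed
  have phiC: "\<phi> h \<in> carrier (monodromy_group E B p b0) \<and> loop_at B b0 (p \<circ> ap h)"
    if "h \<in> carrier (DTG E p)" for h
  proof -
    note aph = ap[of h, OF inc[OF that, THEN conjunct1]]
    have l: "loop_at B b0 (p \<circ> ap h)" by (rule loop) (use aph inc[OF that] in simp_all)
    then show ?thesis unfolding monodromy_group_def \<phi>_def by auto
  qed
  have deck: "h = k" if h: "h \<in> carrier (DTG E p)" and k: "k \<in> carrier (DTG E p)"
    and eq: "h e0 = k e0" for h k
  proof
    fix x
    show "h x = k x"
    proof (cases "x \<in> topspace E")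
      case False then show ?thesis using h k by (simp add: DTG_def)
    next
      case True
      obtain \<gamma> where g: "pathin E \<gamma>" "\<gamma> 0 = e0" "\<gamma> 1 = x"
        using pc e0 True by (auto simp: path_connected_space_def)
      have ch: "continuous_map E E h" "continuous_map E E k"
        using h k by (auto simp: DTG_def homeomorphic_imp_continuous_map)
      have l: "is_lift E p (p \<circ> \<gamma>) (f \<circ> \<gamma>)" if "f \<in> carrier (DTG E p)" "continuous_map E E f" for f
        unfolding is_lift_def using that g pathin_compose pathin_in[OF g(1)]
        by (auto simp: DTG_def)
      have "(h \<circ> \<gamma>) 1 = (k \<circ> \<gamma>) 1"
        by (rule lift_unique[OF ac l[OF h ch(1)] l[OF k ch(2)]]) (use g eq in auto)
      then show ?thesis using g by simp
    qed
  qed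
  have hom: "\<phi> \<in> hom (DTG E p) (monodromy_group E B p b0)"
    unfolding hom_def
  proof (intro CollectI conjI ballI)
    show "\<phi> \<in> carrier (DTG E p) \<rightarrow> carrier (monodromy_group E B p b0)" using phiC by blast
  next
    fix h k assume h: "h \<in> carrier (DTG E p)" and k: "k \<in> carrier (DTG E p)"
    have hk: "(h \<otimes>\<^bsub>DTG E p\<^esub> k) = h \<circ> k" by (simp add: DTG_def)
    define \<beta>1 where "\<beta>1 = (SOME \<beta>. \<beta> \<in> \<phi> h)"
    define \<beta>2 where "\<beta>2 = (SOME \<beta>. \<beta> \<in> \<phi> k)"
    have ne1: "\<exists>\<beta>. \<beta> \<in> \<phi> h" using mem_class[OF ac] phiC[OF h] unfolding \<phi>_def by blast
    have "\<beta>1 \<in> \<phi> h" unfolding \<beta>1_def by (rule someI_ex[OF ne1])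
    then have b1: "loop_at B b0 \<beta>1" "mono_equiv E p (p \<circ> ap h) \<beta>1" by (auto simp: \<phi>_def mono_class_def)
    have ne2: "\<exists>\<beta>. \<beta> \<in> \<phi> k" using mem_class[OF ac] phiC[OF k] unfolding \<phi>_def by blast
    have "\<beta>2 \<in> \<phi> k" unfolding \<beta>2_def by (rule someI_ex[OF ne2])
    then have b2: "loop_at B b0 \<beta>2" "mono_equiv E p (p \<circ> ap k) \<beta>2" by (auto simp: \<phi>_def mono_class_def)
    have mul: "\<phi> h \<otimes>\<^bsub>monodromy_group E B p b0\<^esub> \<phi> k = mono_class E B p b0 (concat_path \<beta>1 \<beta>2)"
      by (simp add: monodromy_group_def \<beta>1_def \<beta>2_def)
    note aph = ap[of h, OF inc[OF h, THEN conjunct1]] and apk = ap[of k, OF inc[OF k, THEN conjunct1]]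
    obtain g1 where g1: "is_lift E p \<beta>1 g1" "g1 0 = e0"
      using lift_exists[OF ac e0] b1 b0 by (auto simp: loop_at_def)
    have "ap h 1 = g1 1"
      using b1(2)[unfolded mono_equiv_def, rule_format, of "ap h" g1] g1 aph is_lift_self[of E "ap h" p]
      by simp
    then have g11: "g1 1 = h e0" using aph by simp
    obtain g2 where g2: "is_lift E p \<beta>2 g2" "g2 0 = h e0"
      using lift_exists[OF ac, of "h e0" \<beta>2] b2 inc[OF h] by (auto simp: loop_at_def)
    have ch: "continuous_map E E h" using h by (auto simp: DTG_def homeomorphic_imp_continuous_map)
    have lhk: "is_lift E p (p \<circ> ap k) (h \<circ> ap k)"
      unfolding is_lift_def using apk h pathin_compose[OF _ ch] pathin_in[of E "ap k"]
      by (auto simp: DTG_def)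
    have "h (ap k 1) = g2 1"
      using b2(2)[unfolded mono_equiv_def, rule_format, of "h \<circ> ap k" g2] g2 lhk apk
      by simp
    then have g21: "g2 1 = h (k e0)" using apk by simp
    have hke: "h (k e0) \<in> topspace E \<and> p (h (k e0)) = b0"
      using cmap_in[OF DTG_carrierD(1)[OF h], of "k e0"] DTG_carrierD(2)[OF h, of "k e0"] inc[OF k]
      by simp
    note aphk = ap[of "h \<circ> k"]
    have lc: "loop_at B b0 (concat_path \<beta>1 \<beta>2)"
    proof -
      have "pathin B (concat_path \<beta>1 \<beta>2)"
        using b1 b2 by (intro pathin_concat) (simp_all add: loop_at_def)
      then show ?thesis using b1 b2 by (simp add: loop_at_def concat_path_def)
    qed
    have "mono_class E B p b0 (concat_path \<beta>1 \<beta>2) = \<phi> (h \<circ> k)"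
      unfolding \<phi>_def
    proof (rule class_eq[OF ac lc])
      show "loop_at B b0 (p \<circ> ap (h \<circ> k))" using aphk hke loop by auto
      show "mono_equiv E p (concat_path \<beta>1 \<beta>2) (p \<circ> ap (h \<circ> k))"
        by (rule key[OF reg lc _ is_lift_concat[OF g1(1) g2(1)] is_lift_self])
          (use aphk hke loop g1 g2 g11 g21 in \<open>auto simp: concat_path_def\<close>)
    qed
    then show "\<phi> (h \<otimes>\<^bsub>DTG E p\<^esub> k) = \<phi> h \<otimes>\<^bsub>monodromy_group E B p b0\<^esub> \<phi> k"
      using hk mul by simp
  qed
  have inj: "inj_on \<phi> (carrier (DTG E p))"
  proof (rule inj_onI)
    fix h k assume h: "h \<in> carrier (DTG E p)" and k: "k \<in> carrier (DTG E p)" and eq: "\<phi> h = \<phi> k"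
    have "p \<circ> ap k \<in> \<phi> h" using eq mem_class[OF ac] phiC[OF k] by (simp add: \<phi>_def)
    then have "mono_equiv E p (p \<circ> ap h) (p \<circ> ap k)" by (simp add: \<phi>_def mono_class_def)
    note me = this[unfolded mono_equiv_def, rule_format, of "ap h" "ap k"]
    note aph = ap[of h, OF inc[OF h, THEN conjunct1]] and apk = ap[of k, OF inc[OF k, THEN conjunct1]]
    have "ap h 1 = ap k 1"
      by (rule me) (use is_lift_self[of E "ap h" p] is_lift_self[of E "ap k" p] aph apk in simp)
    then have "h e0 = k e0" using aph apk by simp
    then show "h = k" using deck h k by blast
  qed
  have third: "\<forall>h\<in>carrier (DTG E p). \<forall>\<alpha>. pathin E \<alpha> \<and> \<alpha> 0 = e0 \<and> \<alpha> 1 = h e0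
                  \<longrightarrow> \<phi> h = mono_class E B p b0 (p \<circ> \<alpha>)"
  proof (intro ballI allI impI)
    fix h \<alpha> assume h: "h \<in> carrier (DTG E p)" and a: "pathin E \<alpha> \<and> \<alpha> 0 = e0 \<and> \<alpha> 1 = h e0"
    show "\<phi> h = mono_class E B p b0 (p \<circ> \<alpha>)" by (rule P) (use inc[OF h] a in simp_all)
  qed
  have iso: "\<phi> \<in> iso (DTG E p) (monodromy_group E B p b0)" if tr: "acts_transitively_on_fibers E p"
  proof -
    have "\<phi> ` carrier (DTG E p) = carrier (monodromy_group E B p b0)"
    proof
      show "\<phi> ` carrier (DTG E p) \<subseteq> carrier (monodromy_group E B p b0)" using phiC by blast
    next
      show "carrier (monodromy_group E B p b0) \<subseteq> \<phi> ` carrier (DTG E p)"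
      proof
        fix X assume "X \<in> carrier (monodromy_group E B p b0)"
        then obtain \<beta> where X: "X = mono_class E B p b0 \<beta>" and lb: "loop_at B b0 \<beta>"
          by (auto simp: monodromy_group_def)
        obtain g where g: "is_lift E p \<beta> g" "g 0 = e0"
          using lift_exists[OF ac e0] lb b0 by (auto simp: loop_at_def)
        have g1: "g 1 \<in> topspace E" "p (g 1) = p e0"
          using g lb b0 by (auto simp: is_lift_def loop_at_def path_finish_in_topspace)
        obtain h where h: "h \<in> carrier (DTG E p)" "h e0 = g 1"
          using tr[unfolded acts_transitively_on_fibers_def, rule_format, of e0 "g 1"] g1 e0 by auto
        have pg: "pathin E g" using g by (simp add: is_lift_def)
        have "\<phi> h = mono_class E B p b0 (p \<circ> g)"
          by (rule P) (use inc[OF h(1)] pg g h in simp_all)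
        also have "\<dots> = X" unfolding X
        proof (rule class_eq[OF ac])
          show lpg: "loop_at B b0 (p \<circ> g)" using loop[OF pg g(2)] g1 b0 by simp
          show "loop_at B b0 \<beta>" by (rule lb)
          have cong: "is_lift E p (p \<circ> g) = is_lift E p \<beta>"
          proof (intro ext is_lift_cong)
            show "\<forall>t\<in>{0..1}. (p \<circ> g) t = \<beta> t" using g(1) by (simp add: is_lift_def)
          qed
          show "mono_equiv E p (p \<circ> g) \<beta>"
            using mono_equiv_refl[OF ac, of \<beta>] unfolding mono_equiv_def cong .
        qed
        finally show "X \<in> \<phi> ` carrier (DTG E p)" using h by blast
      qed
    qed
    then show ?thesis using hom inj by (simp add: iso_def bij_betw_def)
  qed
  show ?thesis using hom inj third iso by blast
qed

end
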